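(* Let $P(x)=\sum_{j=0}^n a_jx^j$ be a real polynomial of degree $n$, and let $m\in\{0,1,\dots,n\}$ be such that $a_j\ge0$ for all $m\le j\le n$. For $r>0$ define \[ b(r):=\sum_{j=m}^n a_jr^{j-m},\qquad c(r):=\max_{1\le i\le m}\left(\frac{|a_{m-i}|}{b(r)}\right)^{1/i},\qquad \nu_r(P):=\max\{r,\,2c(r)\}. \] Then $P(x)>0$ for all $x>\nu_r(P)$. *)

theory Defs
  imports Complex_Main "HOL-Computational_Algebra.Polynomial"
begin

definition bnd_b :: "real poly \<Rightarrow> nat \<Rightarrow> real \<Rightarrow> real" where
  "bnd_b P m r = (\<Sum>j=m..degree P. coeff P j * r ^ (j - m))"

text \<open>c(r) = max_{1<=i<=m} (|a_(m-i)| / b(r))^(1/i); for m = 0 the (empty) maximum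
  is taken to be 0 (all terms are nonnegative, so inserting 0 does not change it for m >= 1).\<close>
definition bnd_c :: "real poly \<Rightarrow> nat \<Rightarrow> real \<Rightarrow> real" where
  "bnd_c P m r = Max (insert 0 ((\<lambda>i. root i (\<bar>coeff P (m - i)\<bar> / bnd_b P m r)) ` {1..m}))"

definition bnd_nu :: "real poly \<Rightarrow> nat \<Rightarrow> real \<Rightarrow> real" where
  "bnd_nu P m r = max r (2 * bnd_c P m r)"

end

theory Submission
  imports Defs
begin

lemma geo_aux:
  fixes c x :: real
  assumes "0 \<le> c" "2 * c < x"
  shows "(\<Sum>j<m. c ^ (m - j) * x ^ j) < x ^ m"
proof (induction m)
  case 0
  then show ?case by simp
next
  case (Suc m)
  have x0: "x > 0" using assms by linarith
  have eq: "(\<Sum>j<Suc m. c ^ (Suc m - j) * x ^ j) = c * ((\<Sum>j<m. c ^ (m - j) * x ^ j) + x ^ m)"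
    by (simp add: sum_distrib_left Suc_diff_le algebra_simps)
  have "c * ((\<Sum>j<m. c ^ (m - j) * x ^ j) + x ^ m) \<le> c * (2 * x ^ m)"
    using Suc assms by (intro mult_left_mono) auto
  also have "\<dots> < x * x ^ m" using assms x0 by (simp add: mult.assoc[symmetric])
  finally show ?case using eq by simp
qed

theorem proposition1:
  fixes P :: "real poly" and m :: nat and r :: real
  assumes "P \<noteq> 0"
    and "m \<le> degree P"
    and "\<And>j. m \<le> j \<Longrightarrow> j \<le> degree P \<Longrightarrow> coeff P j \<ge> 0"
    and "r > 0"
  shows "\<forall>x. x > bnd_nu P m r \<longrightarrow> poly P x > 0"
proof (intro allI impI)
  fix x assume hx: "x > bnd_nu P m r"
  define n where "n = degree P"
  define b where "b = bnd_b P m r"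
  define c where "c = bnd_c P m r"
  have xr: "x > r" and xc: "x > 2 * c" using hx by (auto simp: bnd_nu_def c_def)
  have x0: "x > 0" using xr assms(4) by linarith
  have an: "coeff P n > 0"
    using assms(1) assms(3)[of n] assms(2) n_def
    by (metis leading_coeff_0_iff order.not_eq_order_implies_strict order_refl)
  have b0: "b > 0"
  proof -
    have "coeff P n * r ^ (n - m) \<le> (\<Sum>j=m..n. coeff P j * r ^ (j - m))"
      by (rule member_le_sum) (use assms n_def in auto)
    moreover have "coeff P n * r ^ (n - m) > 0" using an assms(4) by simp
    ultimately show ?thesis unfolding b_def bnd_b_def n_def by linarith
  qed
  have c0: "c \<ge> 0" unfolding c_def bnd_c_def by (rule Max_ge) auto
  have low: "\<bar>coeff P j\<bar> \<le> b * c ^ (m - j)" if "j < m" for j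
  proof -
    let ?y = "\<bar>coeff P (m - (m - j))\<bar> / b"
    have "root (m - j) ?y \<le> c" unfolding c_def bnd_c_def b_def[symmetric]
    proof (rule Max_ge)
      show "root (m - j) ?y \<in> insert 0 ((\<lambda>i. root i (\<bar>coeff P (m - i)\<bar> / b)) ` {1..m})"
        using that by (intro insertI2 imageI) auto
    qed simp
    moreover have "root (m - j) ?y \<ge> 0" using b0 by (intro real_root_ge_zero) simp
    ultimately have "root (m - j) ?y ^ (m - j) \<le> c ^ (m - j)" by (simp add: power_mono)
    moreover have "root (m - j) ?y ^ (m - j) = ?y"
      using that b0 by (intro real_root_pow_pos2) auto
    ultimately have "\<bar>coeff P j\<bar> / b \<le> c ^ (m - j)" using that by simp
    then show ?thesis using b0 by (simp add: field_simps)
  qed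
  have split: "poly P x = (\<Sum>j<m. coeff P j * x ^ j) + (\<Sum>j=m..n. coeff P j * x ^ j)"
  proof -
    have "{..n} = {..<m} \<union> {m..n}" using assms(2) n_def by auto
    then show ?thesis unfolding poly_altdef n_def[symmetric]
      by (simp add: sum.union_disjoint ivl_disj_int)
  qed
  have H: "(\<Sum>j=m..n. coeff P j * x ^ j) \<ge> x ^ m * b"
  proof -
    have "x ^ m * b = (\<Sum>j=m..n. x ^ m * (coeff P j * r ^ (j - m)))"
      unfolding b_def bnd_b_def n_def by (simp add: sum_distrib_left)
    also have "\<dots> \<le> (\<Sum>j=m..n. coeff P j * x ^ j)"
    proof (rule sum_mono)
      fix j assume j: "j \<in> {m..n}"
      have "coeff P j * r ^ (j - m) \<le> coeff P j * x ^ (j - m)"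
        using j assms(3) n_def assms(4) xr
        by (intro mult_left_mono power_mono) auto
      then have "x ^ m * (coeff P j * r ^ (j - m)) \<le> x ^ m * (coeff P j * x ^ (j - m))"
        using x0 by (rule mult_left_mono[OF _ less_imp_le[OF zero_less_power]])
      also have "\<dots> = coeff P j * x ^ j" using j
        by (simp add: power_add[symmetric] algebra_simps)
      finally show "x ^ m * (coeff P j * r ^ (j - m)) \<le> coeff P j * x ^ j" .
    qed
    finally show ?thesis .
  qed
  have L: "\<bar>\<Sum>j<m. coeff P j * x ^ j\<bar> < b * x ^ m"
  proof -
    have "\<bar>\<Sum>j<m. coeff P j * x ^ j\<bar> \<le> (\<Sum>j<m. \<bar>coeff P j * x ^ j\<bar>)" by (rule sum_abs)
    also have "\<dots> \<le> (\<Sum>j<m. b * (c ^ (m - j) * x ^ j))"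
    proof (rule sum_mono)
      fix j assume "j \<in> {..<m}"
      then show "\<bar>coeff P j * x ^ j\<bar> \<le> b * (c ^ (m - j) * x ^ j)"
        using low[of j] x0 by (simp add: abs_mult mult.assoc[symmetric] mult_right_mono)
    qed
    also have "\<dots> = b * (\<Sum>j<m. c ^ (m - j) * x ^ j)" by (simp add: sum_distrib_left)
    also have "\<dots> < b * x ^ m" using geo_aux[OF c0 xc] b0 by simp
    finally show ?thesis .
  qed
  show "poly P x > 0" using split H L by (simp add: mult.commute)
qed

end
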